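(* The set $\mathcal S(X)$ of skew-convex functions $X\to K$, equipped with pointwise addition and the skew product $\diamond$, is a ring with identity (the constant function $1$).
   Context: Let $K$ be a skew field, $K^*=K\setminus\{0\}$, and let $X$ be a nonempty set on which $K^*$ acts on the left, written $(a,x)\mapsto{}^{a}x$. $\mathcal F(X)$ is the set of all functions $X\to K$ with pointwise addition; the constant function with value $a\in K$ is denoted $a$. The skew product of $f,g\in\mathcal F(X)$ is $(f\diamond g)(x)=f({}^{g(x)}x)\,g(x)$ if $g(x)\neq0$ and $0$ if $g(x)=0$. A function $f\in\mathcal F(X)$ is skew convex if $f\diamond(a+b)=f\diamond a+f\diamond b$ for all $a,b\in K$ (viewed as constant functions). $\mathcal S(X)$ denotes the set of skew-convex functions. *)

theory Defs
  imports Main "HOL-Algebra.Ring"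
begin

definition left_action :: "('k::division_ring \<Rightarrow> 'x \<Rightarrow> 'x) \<Rightarrow> bool" where
  "left_action act \<longleftrightarrow>
     (\<forall>x. act 1 x = x) \<and>
     (\<forall>a b x. a \<noteq> 0 \<longrightarrow> b \<noteq> 0 \<longrightarrow> act a (act b x) = act (a * b) x)"

definition skew_prod :: "('k::division_ring \<Rightarrow> 'x \<Rightarrow> 'x) \<Rightarrow> ('x \<Rightarrow> 'k) \<Rightarrow> ('x \<Rightarrow> 'k) \<Rightarrow> ('x \<Rightarrow> 'k)" where
  "skew_prod act f g = (\<lambda>x. if g x = 0 then 0 else f (act (g x) x) * g x)"

definition skew_convex :: "('k::division_ring \<Rightarrow> 'x \<Rightarrow> 'x) \<Rightarrow> ('x \<Rightarrow> 'k) \<Rightarrow> bool" where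
  "skew_convex act f \<longleftrightarrow>
     (\<forall>a b. \<forall>x. skew_prod act f (\<lambda>_. a + b) x = skew_prod act f (\<lambda>_. a) x + skew_prod act f (\<lambda>_. b) x)"

definition skew_convex_ring :: "('k::division_ring \<Rightarrow> 'x \<Rightarrow> 'x) \<Rightarrow> ('x \<Rightarrow> 'k) ring" where
  "skew_convex_ring act =
     \<lparr>carrier = {f. skew_convex act f},
      mult = skew_prod act,
      one = (\<lambda>_. 1),
      zero = (\<lambda>_. 0),
      add = (\<lambda>f g x. f x + g x)\<rparr>"

end

theory Submission
  imports Defs
begin

lemma sp_assoc:
  assumes "left_action act"
  shows "skew_prod act (skew_prod act f g) h = skew_prod act f (skew_prod act g h)"
proof
  fix x
  show "skew_prod act (skew_prod act f g) h x = skew_prod act f (skew_prod act g h) x"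
  proof (cases "h x = 0")
    case True thus ?thesis by (simp add: skew_prod_def)
  next
    case False
    let ?y = "act (h x) x"
    show ?thesis
    proof (cases "g ?y = 0")
      case True thus ?thesis using False by (simp add: skew_prod_def)
    next
      case G: False
      have "act (g ?y * h x) x = act (g ?y) ?y"
        using assms False G by (simp add: left_action_def)
      thus ?thesis using False G by (simp add: skew_prod_def mult.assoc)
    qed
  qed
qed

lemma sp_ldist:
  assumes "skew_convex act f"
  shows "skew_prod act f (\<lambda>x. g x + h x) = (\<lambda>x. skew_prod act f g x + skew_prod act f h x)"
proof
  fix x
  have "skew_prod act f (\<lambda>_. g x + h x) x = skew_prod act f (\<lambda>_. g x) x + skew_prod act f (\<lambda>_. h x) x"
    using assms by (simp add: skew_convex_def)
  thus "skew_prod act f (\<lambda>x. g x + h x) x = skew_prod act f g x + skew_prod act f h x"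
    by (simp add: skew_prod_def)
qed

lemma sp_rdist:
  "skew_prod act (\<lambda>x. f x + g x) h = (\<lambda>x. skew_prod act f h x + skew_prod act g h x)"
  by (auto simp: skew_prod_def distrib_right)

lemma sp_neg:
  "skew_prod act (\<lambda>x. - f x) h = (\<lambda>x. - skew_prod act f h x)"
  by (auto simp: skew_prod_def)

theorem theorem2p4:
  fixes act :: "'k::division_ring \<Rightarrow> 'x \<Rightarrow> 'x"
  assumes "left_action act"
  shows "ring (skew_convex_ring act)"
proof (rule ringI)
  show "abelian_group (skew_convex_ring act)"
  proof (rule abelian_groupI)
    fix x y assume "x \<in> carrier (skew_convex_ring act)" "y \<in> carrier (skew_convex_ring act)"
    thus "x \<oplus>\<^bsub>skew_convex_ring act\<^esub> y \<in> carrier (skew_convex_ring act)"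
      by (simp add: skew_convex_ring_def skew_convex_def sp_rdist)
  next
    show "\<zero>\<^bsub>skew_convex_ring act\<^esub> \<in> carrier (skew_convex_ring act)"
      by (simp add: skew_convex_ring_def skew_convex_def skew_prod_def)
  next
    fix x y z
    show "x \<oplus>\<^bsub>skew_convex_ring act\<^esub> y \<oplus>\<^bsub>skew_convex_ring act\<^esub> z = x \<oplus>\<^bsub>skew_convex_ring act\<^esub> (y \<oplus>\<^bsub>skew_convex_ring act\<^esub> z)"
      by (simp add: skew_convex_ring_def add.assoc)
  next
    fix x y
    show "x \<oplus>\<^bsub>skew_convex_ring act\<^esub> y = y \<oplus>\<^bsub>skew_convex_ring act\<^esub> x"
      by (simp add: skew_convex_ring_def add.commute)
  next
    fix x
    show "\<zero>\<^bsub>skew_convex_ring act\<^esub> \<oplus>\<^bsub>skew_convex_ring act\<^esub> x = x"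
      by (simp add: skew_convex_ring_def)
  next
    fix x assume x: "x \<in> carrier (skew_convex_ring act)"
    show "\<exists>y\<in>carrier (skew_convex_ring act). y \<oplus>\<^bsub>skew_convex_ring act\<^esub> x = \<zero>\<^bsub>skew_convex_ring act\<^esub>"
    proof (intro bexI[of _ "\<lambda>t. - x t"])
      show "(\<lambda>t. - x t) \<in> carrier (skew_convex_ring act)"
        using x by (simp add: skew_convex_ring_def skew_convex_def sp_neg)
    qed (simp add: skew_convex_ring_def)
  qed
next
  show "monoid (skew_convex_ring act)"
  proof (rule monoidI)
    fix x y assume x: "x \<in> carrier (skew_convex_ring act)" and y: "y \<in> carrier (skew_convex_ring act)"
    have sx: "skew_convex act x" and sy: "skew_convex act y"
      using x y by (auto simp: skew_convex_ring_def)
    have "skew_convex act (skew_prod act x y)"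
      unfolding skew_convex_def
    proof (intro allI)
      fix a b t
      have e: "skew_prod act y (\<lambda>_. a + b) = (\<lambda>t. skew_prod act y (\<lambda>_. a) t + skew_prod act y (\<lambda>_. b) t)"
        using sy by (auto simp: skew_convex_def)
      show "skew_prod act (skew_prod act x y) (\<lambda>_. a + b) t =
         skew_prod act (skew_prod act x y) (\<lambda>_. a) t + skew_prod act (skew_prod act x y) (\<lambda>_. b) t"
        using assms by (simp add: sp_assoc e sp_ldist[OF sx])
    qed
    thus "x \<otimes>\<^bsub>skew_convex_ring act\<^esub> y \<in> carrier (skew_convex_ring act)"
      by (simp add: skew_convex_ring_def)
  next
    show "\<one>\<^bsub>skew_convex_ring act\<^esub> \<in> carrier (skew_convex_ring act)"
      by (simp add: skew_convex_ring_def skew_convex_def skew_prod_def)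
  next
    fix x y z
    show "x \<otimes>\<^bsub>skew_convex_ring act\<^esub> y \<otimes>\<^bsub>skew_convex_ring act\<^esub> z = x \<otimes>\<^bsub>skew_convex_ring act\<^esub> (y \<otimes>\<^bsub>skew_convex_ring act\<^esub> z)"
      using assms by (simp add: skew_convex_ring_def sp_assoc)
  next
    fix x
    show "\<one>\<^bsub>skew_convex_ring act\<^esub> \<otimes>\<^bsub>skew_convex_ring act\<^esub> x = x"
      by (auto simp: skew_convex_ring_def skew_prod_def)
  next
    fix x
    show "x \<otimes>\<^bsub>skew_convex_ring act\<^esub> \<one>\<^bsub>skew_convex_ring act\<^esub> = x"
      using assms by (auto simp: skew_convex_ring_def skew_prod_def left_action_def)
  qed
next
  fix x y z
  show "(x \<oplus>\<^bsub>skew_convex_ring act\<^esub> y) \<otimes>\<^bsub>skew_convex_ring act\<^esub> z = x \<otimes>\<^bsub>skew_convex_ring act\<^esub> z \<oplus>\<^bsub>skew_convex_ring act\<^esub> y \<otimes>\<^bsub>skew_convex_ring act\<^esub> z"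
    by (simp add: skew_convex_ring_def sp_rdist)
next
  fix x y z assume "z \<in> carrier (skew_convex_ring act)"
  thus "z \<otimes>\<^bsub>skew_convex_ring act\<^esub> (x \<oplus>\<^bsub>skew_convex_ring act\<^esub> y) = z \<otimes>\<^bsub>skew_convex_ring act\<^esub> x \<oplus>\<^bsub>skew_convex_ring act\<^esub> z \<otimes>\<^bsub>skew_convex_ring act\<^esub> y"
    by (simp add: skew_convex_ring_def sp_ldist)
qed

end
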